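(* Let $\{X_n\}$ be the Bessel-like walk of the context with $\delta>-1$, and let $l_1\ge1$ be an integer as described in the context. There exist constants $K_3,K_4>0$ (depending only on $\epsilon$, $l_1$ and the transition probabilities) such that for all integers $h>l_1$ and $m\ge 4h^2$, \[ P_0\big(X_n\in(0,h)\text{ for all } 1\le n\le m\big)\le\frac{K_3}{M_h}e^{-K_4m/h^2}. \]
   Context: Let $\{X_n\}_{n\ge0}$ be a Markov chain on $\mathbb{Z}_+=\{0,1,2,\dots\}$ with steps $\pm1$, reflecting at $0$ (i.e. $p(0,1)=1$), and for $x\ge1$ transition probabilities $p_x=p(x,x+1)$, $q_x=p(x,x-1)=1-p_x$. A drift parameter $\delta$ is fixed and $R_x$ is defined by $p_x=\frac12\left(1-\frac{\delta}{2x}+\frac{R_x}{2}\right)$, where $R_x=o(1/x)$. Uniform ellipticity: there is $\epsilon>0$ with $p_x,q_x\in[\epsilon,1-\epsilon]$ for all $x\ge1$. Set $\kappa=(1+\delta)/2$, $\lambda_0=1$, $\lambda_x=\prod_{k=1}^xq_k/p_k$, $M_0=0$, $M_x=\sum_{k=0}^{x-1}\lambda_k$, and $L(x)=\exp(R_1+\dots+R_x)$. Let $K_0>0$ be the constant with $\lambda_x\sim K_0x^{2\kappa-1}L(x)^{-1}$. The integer $l_1\ge1$ is chosen so that for all $x\ge l_1$: $x|R_x|\le\frac12$; $\frac{2\kappa M_x}{K_0x^{2\kappa}L(x)^{-1}}\in(\frac78,\frac98)$; $\frac{2\kappa(M_{2x}-M_x)}{K_0(2^{2\kappa}-1)x^{2\kappa}L(x)^{-1}}\in(\frac78,\frac98)$;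 and, if $\delta\ne0$, $|x(2p_x-1)+\frac\delta2|<\frac{|\delta|}{4}$. $P_0$ is the law of the chain started at $0$. *)

theory Defs
  imports "HOL-Analysis.Analysis" "HOL-Library.Landau_Symbols"
begin

definition trans_prob :: "(nat \<Rightarrow> real) \<Rightarrow> nat \<Rightarrow> nat \<Rightarrow> real" where
  "trans_prob p x y =
     (if x = 0 then (if y = 1 then 1 else 0)
      else if y = x + 1 then p x
      else if y + 1 = x then 1 - p x
      else 0)"

text \<open>P_0(X_n \<in> (0,h) for all 1 \<le> n \<le> m): sum over all admissible paths
  x_1,...,x_m (list xs) of the product of transition probabilities, with x_0 = 0.\<close>
definition stay_prob :: "(nat \<Rightarrow> real) \<Rightarrow> nat \<Rightarrow> nat \<Rightarrow> real" where
  "stay_prob p h m =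
     (\<Sum>xs\<in>{xs. length xs = m \<and> set xs \<subseteq> {0<..<h}}.
        \<Prod>i<m. trans_prob p ((0 # xs) ! i) ((0 # xs) ! (i + 1)))"

definition Rterm :: "(nat \<Rightarrow> real) \<Rightarrow> real \<Rightarrow> nat \<Rightarrow> real" where
  "Rterm p \<delta> x = 4 * p x - 2 + \<delta> / real x"

definition kappa :: "real \<Rightarrow> real" where
  "kappa \<delta> = (1 + \<delta>) / 2"

definition lam :: "(nat \<Rightarrow> real) \<Rightarrow> nat \<Rightarrow> real" where
  "lam p x = (\<Prod>k\<in>{1..x}. (1 - p k) / p k)"

definition Mfun :: "(nat \<Rightarrow> real) \<Rightarrow> nat \<Rightarrow> real" where
  "Mfun p x = (\<Sum>k<x. lam p k)"

definition Lfun :: "(nat \<Rightarrow> real) \<Rightarrow> real \<Rightarrow> nat \<Rightarrow> real" where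
  "Lfun p \<delta> x = exp (\<Sum>k\<in>{1..x}. Rterm p \<delta> k)"

end

theory Submission
  imports Defs
begin



definition Qop :: "(nat\<Rightarrow>real) \<Rightarrow> nat \<Rightarrow> (nat \<Rightarrow> real) \<Rightarrow> nat \<Rightarrow> real" where
  "Qop p h F x = (\<Sum>y\<in>{0<..<h}. trans_prob p x y * F y)"

fun iterQ :: "(nat\<Rightarrow>real) \<Rightarrow> nat \<Rightarrow> nat \<Rightarrow> (nat \<Rightarrow> real) \<Rightarrow> nat \<Rightarrow> real" where
  "iterQ p h 0 F = F"
| "iterQ p h (Suc k) F = Qop p h (iterQ p h k F)"

definition uu :: "(nat\<Rightarrow>real) \<Rightarrow> nat \<Rightarrow> nat \<Rightarrow> nat \<Rightarrow> real" where
  "uu p h k = iterQ p h k (\<lambda>_. 1)"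

lemma trans_prob_nonneg:
  assumes "\<forall>x\<ge>1. 0 \<le> p x \<and> p x \<le> 1"
  shows "0 \<le> trans_prob p x y"
  using assms by (auto simp: trans_prob_def)

lemma Qop_formula:
  assumes "0 < x" "x < h"
  shows "Qop p h F x = (if x+1 < h then p x * F (x+1) else 0) + (if 2 \<le> x then (1 - p x) * F (x-1) else 0)"
proof -
  have tp: "\<And>y. trans_prob p x y * F y = (if y = x+1 then p x * F y else 0) + (if y = x - 1 then (1 - p x) * F y else 0)"
    using assms by (auto simp: trans_prob_def)
  have "Qop p h F x = (\<Sum>y\<in>{0<..<h}. (if y = x+1 then p x * F y else 0)) + (\<Sum>y\<in>{0<..<h}. (if y = x - 1 then (1 - p x) * F y else 0))"
    unfolding Qop_def tp by (simp add: sum.distrib)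
  also have "\<dots> = (if x+1 < h then p x * F (x+1) else 0) + (if 2 \<le> x then (1 - p x) * F (x-1) else 0)"
    using assms by (auto simp: sum.delta')
  finally show ?thesis .
qed

lemma Qop_mono:
  assumes "\<forall>x\<ge>1. 0 \<le> p x \<and> p x \<le> 1" "\<forall>y\<in>{0<..<h}. F y \<le> G y"
  shows "Qop p h F x \<le> Qop p h G x"
  unfolding Qop_def by (rule sum_mono) (use assms trans_prob_nonneg[OF assms(1)] in \<open>auto intro: mult_left_mono\<close>)

lemma iterQ_mono:
  assumes "\<forall>x\<ge>1. 0 \<le> p x \<and> p x \<le> 1" "\<forall>y\<in>{0<..<h}. F y \<le> G y"
  shows "x \<in> {0<..<h} \<Longrightarrow> iterQ p h k F x \<le> iterQ p h k G x"
proof (induction k arbitrary: x)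
  case 0 then show ?case using assms by simp
next
  case (Suc k) then show ?case using Qop_mono[OF assms(1)] by simp
qed

lemma Qop_lin: "Qop p h (\<lambda>y. a * F y + b * G y) x = a * Qop p h F x + b * Qop p h G x"
  unfolding Qop_def by (simp add: sum.distrib sum_distrib_left algebra_simps)

lemma iterQ_lin: "iterQ p h k (\<lambda>y. a * F y + b * G y) x = a * iterQ p h k F x + b * iterQ p h k G x"
proof (induction k arbitrary: x)
  case 0 then show ?case by simp
next
  case (Suc k)
  have "iterQ p h k (\<lambda>y. a * F y + b * G y) = (\<lambda>y. a * iterQ p h k F y + b * iterQ p h k G y)"
    using Suc by auto
  then show ?case by (simp add: Qop_lin)
qed

lemma iterQ_add: "iterQ p h (a + b) F = iterQ p h a (iterQ p h b F)"
  by (induction a) auto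

lemma iterQ_Suc': "iterQ p h (Suc k) F = iterQ p h k (Qop p h F)"
  using iterQ_add[of p h k 1 F] by simp

lemma Qop_one_le:
  assumes "\<forall>x\<ge>1. 0 \<le> p x \<and> p x \<le> 1" "x \<in> {0<..<h}"
  shows "Qop p h (\<lambda>_. 1) x \<le> 1"
  using assms by (auto simp: Qop_formula)

lemma iterQ_const_bound:
  assumes "\<forall>x\<ge>1. 0 \<le> p x \<and> p x \<le> 1" "\<forall>y\<in>{0<..<h}. F y \<le> b" "x \<in> {0<..<h}"
  shows "iterQ p h k F x \<le> b * uu p h k x"
proof -
  have "iterQ p h k F x \<le> iterQ p h k (\<lambda>y. b * 1 + 0 * F y) x"
    by (rule iterQ_mono[OF assms(1) _ assms(3)]) (use assms(2) in auto)
  also have "\<dots> = b * uu p h k x" unfolding iterQ_lin uu_def by simp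
  finally show ?thesis .
qed

lemma iterQ_nonneg:
  assumes "\<forall>x\<ge>1. 0 \<le> p x \<and> p x \<le> 1" "\<forall>y\<in>{0<..<h}. 0 \<le> F y" "x \<in> {0<..<h}"
  shows "0 \<le> iterQ p h k F x"
proof -
  have "iterQ p h k (\<lambda>y. 0 * F y + 0 * F y) x \<le> iterQ p h k F x"
    by (rule iterQ_mono[OF assms(1) _ assms(3)]) (use assms(2) in auto)
  then show ?thesis unfolding iterQ_lin by simp
qed

lemma uu_nonneg:
  assumes "\<forall>x\<ge>1. 0 \<le> p x \<and> p x \<le> 1" "x \<in> {0<..<h}"
  shows "0 \<le> uu p h k x"
  unfolding uu_def by (rule iterQ_nonneg[OF assms(1) _ assms(2)]) auto

lemma uu_Suc_le:
  assumes "\<forall>x\<ge>1. 0 \<le> p x \<and> p x \<le> 1" "x \<in> {0<..<h}"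
  shows "uu p h (Suc k) x \<le> uu p h k x"
  unfolding uu_def iterQ_Suc'
  by (rule iterQ_mono[OF assms(1) _ assms(2)]) (use Qop_one_le[OF assms(1)] in auto)

lemma uu_antimono:
  assumes "\<forall>x\<ge>1. 0 \<le> p x \<and> p x \<le> 1" "x \<in> {0<..<h}" "k \<le> n"
  shows "uu p h n x \<le> uu p h k x"
  using lift_Suc_antimono_le[of "\<lambda>k. uu p h k x", OF uu_Suc_le[OF assms(1,2)] assms(3)] .

lemma uu_le1:
  assumes "\<forall>x\<ge>1. 0 \<le> p x \<and> p x \<le> 1" "x \<in> {0<..<h}"
  shows "uu p h n x \<le> 1"
  using uu_antimono[OF assms, of 0 n] by (simp add: uu_def)

lemma lyap_sum:
  assumes P: "\<forall>x\<ge>1. 0 \<le> p x \<and> p x \<le> 1"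
    and V: "\<forall>x\<in>{0<..<h}. Qop p h V x \<le> V x - 1" "\<forall>x\<in>{0<..<h}. 0 \<le> V x"
  shows "x \<in> {0<..<h} \<Longrightarrow> (\<Sum>k<n. uu p h k x) \<le> V x - iterQ p h n V x"
proof (induction n arbitrary: x)
  case 0 then show ?case by simp
next
  case (Suc n)
  have "iterQ p h (Suc n) V x = iterQ p h n (Qop p h V) x" by (simp only: iterQ_Suc')
  also have "\<dots> \<le> iterQ p h n (\<lambda>y. 1 * V y + (-1) * 1) x"
    by (rule iterQ_mono[OF P _ Suc.prems]) (use V in auto)
  also have "\<dots> = iterQ p h n V x - uu p h n x" unfolding iterQ_lin uu_def by simp
  finally show ?case using Suc.IH[OF Suc.prems] by simp
qed

lemma lyap_bound:
  assumes P: "\<forall>x\<ge>1. 0 \<le> p x \<and> p x \<le> 1"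
    and V: "\<forall>x\<in>{0<..<h}. Qop p h V x \<le> V x - 1" "\<forall>x\<in>{0<..<h}. 0 \<le> V x"
    and x: "x \<in> {0<..<h}"
  shows "real n * uu p h n x \<le> V x"
proof -
  have "real n * uu p h n x = (\<Sum>k<n. uu p h n x)" by simp
  also have "\<dots> \<le> (\<Sum>k<n. uu p h k x)"
    by (rule sum_mono) (use uu_antimono[OF P x] in auto)
  also have "\<dots> \<le> V x - iterQ p h n V x" by (rule lyap_sum[OF P V x])
  also have "\<dots> \<le> V x" using iterQ_nonneg[OF P V(2) x] by simp
  finally show ?thesis .
qed




lemma gsum: "(\<Sum>xs\<in>{xs. length xs = n \<and> set xs \<subseteq> {0<..<h}}. \<Prod>i<n. trans_prob p ((x # xs) ! i) ((x # xs) ! (i + 1))) = iterQ p h n (\<lambda>_. 1) x"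
proof (induction n arbitrary: x)
  case 0
  have "{xs. length xs = 0 \<and> set xs \<subseteq> {0<..<h::nat}} = {[]}" by auto
  then show ?case by simp
next
  case (Suc n)
  let ?L = "\<lambda>n. {xs. length xs = n \<and> set xs \<subseteq> {0<..<h::nat}}"
  have fin: "finite (?L n)" using finite_lists_length_eq[of "{0<..<h}" n] by (simp add: conj_commute)
  have L: "?L (Suc n) = (\<lambda>(y,ys). y#ys) ` ({0<..<h} \<times> ?L n)"
    by (auto simp: length_Suc_conv image_iff)
  have inj: "inj_on (\<lambda>(y,ys). y#ys) ({0<..<h} \<times> ?L n)" by (auto simp: inj_on_def)
  have "(\<Sum>xs\<in>?L (Suc n). \<Prod>i<Suc n. trans_prob p ((x # xs) ! i) ((x # xs) ! (i + 1)))
      = (\<Sum>(y,ys)\<in>{0<..<h} \<times> ?L n. \<Prod>i<Suc n. trans_prob p ((x # y # ys) ! i) ((x # y # ys) ! (i + 1)))"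
    unfolding L by (subst sum.reindex[OF inj]) (simp add: case_prod_beta)
  also have "\<dots> = (\<Sum>(y,ys)\<in>{0<..<h} \<times> ?L n. trans_prob p x y * (\<Prod>i<n. trans_prob p ((y # ys) ! i) ((y # ys) ! (i + 1))))"
    by (rule sum.cong[OF refl]) (clarify, simp only: prod.lessThan_Suc_shift, simp)
  also have "\<dots> = (\<Sum>y\<in>{0<..<h}. \<Sum>ys\<in>?L n. trans_prob p x y * (\<Prod>i<n. trans_prob p ((y # ys) ! i) ((y # ys) ! (i + 1))))"
    by (subst sum.cartesian_product) simp
  also have "\<dots> = (\<Sum>y\<in>{0<..<h}. trans_prob p x y * iterQ p h n (\<lambda>_. 1) y)"
    by (simp add: sum_distrib_left[symmetric] Suc.IH[simplified])
  finally show ?case by (simp add: Qop_def)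
qed

lemma stay_uu:
  assumes "h \<ge> 2" "m \<ge> 1"
  shows "stay_prob p h m = uu p h (m - 1) 1"
proof -
  have "stay_prob p h m = iterQ p h m (\<lambda>_. 1) 0" unfolding stay_prob_def gsum ..
  also have "\<dots> = Qop p h (uu p h (m-1)) 0"
    using assms by (cases m) (auto simp: uu_def)
  also have "\<dots> = uu p h (m-1) 1"
    unfolding Qop_def trans_prob_def using assms
    by (simp add: if_distrib[where f="\<lambda>z. z * _"] sum.delta cong: if_cong)
  finally show ?thesis .
qed




lemma lam_Suc: "lam p (Suc k) = lam p k * ((1 - p (Suc k)) / p (Suc k))"
  unfolding lam_def by simp

lemma lam_pos:
  assumes "\<forall>x\<ge>1. \<epsilon> \<le> p x \<and> p x \<le> 1 - \<epsilon>" "\<epsilon> > 0"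
  shows "lam p x > 0"
  unfolding lam_def
proof (rule prod_pos)
  fix k assume "k \<in> {1..x}"
  then have "\<epsilon> \<le> p k \<and> p k \<le> 1 - \<epsilon>" using assms by auto
  then show "0 < (1 - p k) / p k" using assms by auto
qed

lemma lam_rel:
  assumes "\<forall>x\<ge>1. \<epsilon> \<le> p x \<and> p x \<le> 1 - \<epsilon>" "\<epsilon> > 0" "x \<ge> 1"
  shows "p x * lam p x = (1 - p x) * lam p (x - 1)"
proof -
  obtain k where k: "x = Suc k" using assms(3) by (cases x) auto
  have "p x > 0" using assms by force
  then show ?thesis unfolding k lam_Suc by simp
qed

lemma M_Suc: "Mfun p (Suc x) = Mfun p x + lam p x"
  unfolding Mfun_def by simp

lemma M_0: "Mfun p 0 = 0" unfolding Mfun_def by simp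
lemma M_1: "Mfun p 1 = 1" unfolding Mfun_def lam_def by simp

lemma M_mono:
  assumes "\<forall>x\<ge>1. \<epsilon> \<le> p x \<and> p x \<le> 1 - \<epsilon>" "\<epsilon> > 0" "x \<le> y"
  shows "Mfun p x \<le> Mfun p y"
proof -
  have "\<And>n. Mfun p n \<le> Mfun p (Suc n)" using M_Suc lam_pos[OF assms(1,2)] by (simp add: less_imp_le)
  then show ?thesis using lift_Suc_mono_le[of "Mfun p", OF _ assms(3)] by blast
qed

lemma M_pos:
  assumes "\<forall>x\<ge>1. \<epsilon> \<le> p x \<and> p x \<le> 1 - \<epsilon>" "\<epsilon> > 0" "x \<ge> 1"
  shows "Mfun p x \<ge> 1"
  using M_mono[OF assms(1,2) assms(3)] M_1 by simp

lemma M_nonneg: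
  assumes "\<forall>x\<ge>1. \<epsilon> \<le> p x \<and> p x \<le> 1 - \<epsilon>" "\<epsilon> > 0"
  shows "Mfun p x \<ge> 0"
  using M_mono[OF assms, of 0 x] M_0 by simp

lemma M_harm:
  assumes "\<forall>x\<ge>1. \<epsilon> \<le> p x \<and> p x \<le> 1 - \<epsilon>" "\<epsilon> > 0" "x \<ge> 1"
  shows "p x * Mfun p (x+1) + (1 - p x) * Mfun p (x - 1) = Mfun p x"
proof -
  obtain k where k: "x = Suc k" using assms(3) by (cases x) auto
  have "p x * lam p x = (1 - p x) * lam p k" using lam_rel[OF assms] k by simp
  then show ?thesis unfolding k using M_Suc[of p "Suc k"] M_Suc[of p k]
    by (simp add: algebra_simps)
qed

lemma P01:
  fixes p :: "nat \<Rightarrow> real"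
  assumes "\<forall>x\<ge>1. \<epsilon> \<le> p x \<and> p x \<le> 1 - \<epsilon>" "\<epsilon> > 0"
  shows "\<forall>x\<ge>1. 0 \<le> p x \<and> p x \<le> 1"
proof (intro allI impI)
  fix x :: nat assume "x \<ge> 1"
  then have "\<epsilon> \<le> p x \<and> p x \<le> 1 - \<epsilon>" using assms by blast
  then show "0 \<le> p x \<and> p x \<le> 1" using assms by linarith
qed

lemma decomp:
  assumes E: "\<forall>x\<ge>1. \<epsilon> \<le> p x \<and> p x \<le> 1 - \<epsilon>" "\<epsilon> > 0"
    and a: "2 \<le> a" "a \<le> h"
    and b: "\<forall>k. \<forall>y\<in>{0<..<h}. uu p h k y \<le> b k" "\<forall>k. 0 \<le> b k" "\<forall>k. b (Suc k) \<le> b k"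
  shows "j \<le> n \<Longrightarrow> x \<in> {0<..<a} \<Longrightarrow> uu p h n x \<le> uu p a j x + Mfun p x / Mfun p a * b (n - j)"
proof (induction j arbitrary: n x)
  case 0
  have P: "\<forall>x\<ge>1. 0 \<le> p x \<and> p x \<le> 1" using P01[OF E] .
  have "uu p h n x \<le> 1" using uu_le1[OF P, of x h] 0 a by auto
  moreover have "0 \<le> Mfun p x / Mfun p a * b (n - 0)"
    using M_nonneg[OF E] b(2) by simp
  ultimately show ?case by (simp add: uu_def)
next
  case (Suc j)
  have P: "\<forall>x\<ge>1. 0 \<le> p x \<and> p x \<le> 1" using P01[OF E] .
  obtain n' where n': "n = Suc n'" using Suc.prems by (cases n) auto
  have jn: "j \<le> n'" using Suc.prems n' by simp
  have x: "0 < x" "x < a" using Suc.prems by auto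
  have px: "0 \<le> p x" "p x \<le> 1" using P x by auto
  define B where "B = b (n' - j)"
  have bant: "b n' \<le> B" unfolding B_def
    using lift_Suc_antimono_le[of b] b(3) by simp
  have Mapos: "Mfun p a > 0" using M_pos[OF E, of a] a by simp
  have U: "uu p h (Suc n') x = (if x+1<h then p x * uu p h n' (x+1) else 0) + (if 2\<le>x then (1-p x)*uu p h n' (x-1) else 0)"
    unfolding uu_def using x a by (simp add: Qop_formula)
  have Ua: "uu p a (Suc j) x = (if x+1<a then p x * uu p a j (x+1) else 0) + (if 2\<le>x then (1-p x)*uu p a j (x-1) else 0)"
    unfolding uu_def using x a by (simp add: Qop_formula)
  have t1: "(if x+1<h then p x * uu p h n' (x+1) else 0) \<le> (if x+1<a then p x * uu p a j (x+1) else 0) + p x * (Mfun p (x+1) / Mfun p a * B)"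
  proof (cases "x + 1 < a")
    case True
    have "uu p h n' (x+1) \<le> uu p a j (x+1) + Mfun p (x+1) / Mfun p a * B"
      using Suc.IH[OF jn, of "x+1"] True unfolding B_def by simp
    then have "p x * uu p h n' (x+1) \<le> p x * (uu p a j (x+1) + Mfun p (x+1) / Mfun p a * B)"
      using px by (intro mult_left_mono) auto
    moreover have "(if x+1<h then p x * uu p h n' (x+1) else 0) = p x * uu p h n' (x+1)" using True a by simp
    moreover have "(if x+1<a then p x * uu p a j (x+1) else 0) = p x * uu p a j (x+1)" using True by simp
    ultimately show ?thesis by (simp only: distrib_left)
  next
    case False
    then have xa: "x + 1 = a" using x by simp
    have "(if x+1<h then p x * uu p h n' (x+1) else 0) \<le> p x * B"
    proof (cases "x+1<h")
      case True
      then have "uu p h n' a \<le> b n'" using b(1) xa a by auto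
      then have "uu p h n' (x+1) \<le> B" using bant xa by simp
      then show ?thesis using True px by (simp add: mult_left_mono)
    next
      case False then show ?thesis using px b(2) unfolding B_def by simp
    qed
    then show ?thesis using xa Mapos by simp
  qed
  have t2: "(if 2\<le>x then (1-p x)*uu p h n' (x-1) else 0) \<le> (if 2\<le>x then (1-p x)*uu p a j (x-1) else 0) + (1 - p x) * (Mfun p (x-1) / Mfun p a * B)"
  proof (cases "2 \<le> x")
    case True
    have "uu p h n' (x-1) \<le> uu p a j (x-1) + Mfun p (x-1) / Mfun p a * B"
      using Suc.IH[OF jn, of "x-1"] True x unfolding B_def by simp
    then have "(1 - p x) * uu p h n' (x-1) \<le> (1 - p x) * (uu p a j (x-1) + Mfun p (x-1) / Mfun p a * B)"
      using px by (intro mult_left_mono) auto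
    then show ?thesis using True by (simp only: distrib_left if_True)
  next
    case False
    then have "x = 1" using x by simp
    then show ?thesis by (simp add: M_0)
  qed
  have harm: "p x * (Mfun p (x+1) / Mfun p a * B) + (1 - p x) * (Mfun p (x-1) / Mfun p a * B) = Mfun p x / Mfun p a * B"
  proof -
    have "p x * (Mfun p (x+1) / Mfun p a * B) + (1 - p x) * (Mfun p (x-1) / Mfun p a * B) = (p x * Mfun p (x+1) + (1 - p x) * Mfun p (x-1)) / Mfun p a * B"
      by (simp add: algebra_simps add_divide_distrib diff_divide_distrib)
    then show ?thesis using M_harm[OF E, of x] x by simp
  qed
  have "uu p h n x \<le> uu p a (Suc j) x + Mfun p x / Mfun p a * B" unfolding n' U Ua using t1 t2 harm by linarith
  moreover have "n - Suc j = n' - j" using n' by simp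
  ultimately show ?case by (simp add: B_def)
qed




definition Vf :: "(nat\<Rightarrow>real) \<Rightarrow> nat \<Rightarrow> nat \<Rightarrow> real" where
  "Vf p h x = (\<Sum>y\<in>{1..<h}. Mfun p (min x y) / ((1 - p y) * lam p (y - 1)))"

lemma Vf_nonneg:
  assumes E: "\<forall>x\<ge>1. \<epsilon> \<le> p x \<and> p x \<le> 1 - \<epsilon>" "\<epsilon> > 0"
  shows "0 \<le> Vf p h x"
  unfolding Vf_def
proof (rule sum_nonneg)
  fix y assume "y \<in> {1..<h}"
  then have "1 - p y > 0" using E by force
  then have "0 < (1 - p y) * lam p (y - 1)" using lam_pos[OF E] by simp
  then show "0 \<le> Mfun p (min x y) / ((1 - p y) * lam p (y - 1))"
    using M_nonneg[OF E] by (simp add: divide_nonneg_pos)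
qed

lemma Vf_eq:
  assumes E: "\<forall>x\<ge>1. \<epsilon> \<le> p x \<and> p x \<le> 1 - \<epsilon>" "\<epsilon> > 0"
    and x: "0 < x" "x < h"
  shows "p x * Vf p h (x+1) + (1 - p x) * Vf p h (x-1) = Vf p h x - 1"
proof -
  define d where "d = (\<lambda>y. (1 - p y) * lam p (y - 1))"
  have per: "p x * (Mfun p (min (x+1) y) / d y) + (1 - p x) * (Mfun p (min (x-1) y) / d y)
       = Mfun p (min x y) / d y - (if y = x then 1 else 0)" if y: "y \<in> {1..<h}" for y
  proof -
    have dpos: "d y > 0" unfolding d_def using E y lam_pos[OF E] by (force intro!: mult_pos_pos)
    consider "x < y" | "y < x" | "y = x" by linarith
    then show ?thesis
    proof cases
      case 1
      then have "min (x+1) y = x+1" "min (x-1) y = x-1" "min x y = x" by auto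
      moreover have "p x * (Mfun p (x+1) / d y) + (1 - p x) * (Mfun p (x-1) / d y) = (p x * Mfun p (x+1) + (1 - p x) * Mfun p (x-1)) / d y"
        by (simp add: algebra_simps add_divide_distrib diff_divide_distrib)
      ultimately show ?thesis using M_harm[OF E, of x] x 1 by simp
    next
      case 2
      then have "min (x+1) y = y" "min (x-1) y = y" "min x y = y" by auto
      moreover have "p x * (Mfun p y / d y) + (1 - p x) * (Mfun p y / d y) = (p x * Mfun p y + (1 - p x) * Mfun p y) / d y"
        by (simp add: algebra_simps add_divide_distrib diff_divide_distrib)
      ultimately show ?thesis using 2 by (simp add: algebra_simps)
    next
      case 3
      obtain k where k: "x = Suc k" using x by (cases x) auto
      have Mx: "Mfun p x = Mfun p (x-1) + lam p (x-1)" using M_Suc[of p k] k by simp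
      have "p x * (Mfun p x / d x) + (1 - p x) * (Mfun p (x-1) / d x) = (p x * Mfun p x + (1 - p x) * Mfun p (x-1)) / d x"
        by (simp add: algebra_simps add_divide_distrib diff_divide_distrib)
      also have "p x * Mfun p x + (1 - p x) * Mfun p (x-1) = Mfun p x - d x"
        unfolding d_def Mx by (simp add: algebra_simps)
      also have "(Mfun p x - d x) / d x = Mfun p x / d x - 1" using dpos 3 by (simp add: diff_divide_distrib)
      finally show ?thesis using 3 by simp
    qed
  qed
  have "p x * Vf p h (x+1) + (1 - p x) * Vf p h (x-1)
      = (\<Sum>y\<in>{1..<h}. p x * (Mfun p (min (x+1) y) / d y) + (1 - p x) * (Mfun p (min (x-1) y) / d y))"
    unfolding Vf_def d_def by (simp add: sum.distrib sum_distrib_left)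
  also have "\<dots> = (\<Sum>y\<in>{1..<h}. Mfun p (min x y) / d y - (if y = x then 1 else 0))"
    by (rule sum.cong[OF refl]) (rule per)
  also have "\<dots> = Vf p h x - 1"
    unfolding Vf_def d_def sum_subtractf using x by simp
  finally show ?thesis .
qed

lemma Vf_lyap:
  assumes E: "\<forall>x\<ge>1. \<epsilon> \<le> p x \<and> p x \<le> 1 - \<epsilon>" "\<epsilon> > 0"
    and x: "x \<in> {0<..<h}"
  shows "Qop p h (Vf p h) x \<le> Vf p h x - 1"
proof -
  have px: "0 \<le> p x" "p x \<le> 1" using P01[OF E] x by auto
  have "Qop p h (Vf p h) x \<le> p x * Vf p h (x+1) + (1 - p x) * Vf p h (x-1)"
    using x px Vf_nonneg[OF E] by (simp add: Qop_formula)
  then show ?thesis using Vf_eq[OF E] x by simp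
qed

lemma Vf_bound:
  assumes E: "\<forall>x\<ge>1. \<epsilon> \<le> p x \<and> p x \<le> 1 - \<epsilon>" "\<epsilon> > 0"
    and C: "\<forall>y\<ge>1. Mfun p y \<le> C * real y * lam p y" "C \<ge> 0"
  shows "Vf p h x \<le> C / \<epsilon> * real h ^ 2"
proof -
  have "Vf p h x \<le> (\<Sum>y\<in>{1..<h}. C / \<epsilon> * real h)"
    unfolding Vf_def
  proof (rule sum_mono)
    fix y assume y: "y \<in> {1..<h}"
    have py: "\<epsilon> \<le> p y" "p y \<le> 1 - \<epsilon>" using E y by auto
    have lp: "lam p y > 0" using lam_pos[OF E] .
    have d: "(1 - p y) * lam p (y - 1) = p y * lam p y" using lam_rel[OF E, of y] y by simp
    have dpos: "p y * lam p y > 0" using py E lp by simp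
    have "Mfun p (min x y) \<le> Mfun p y" by (rule M_mono[OF E]) simp
    also have "\<dots> \<le> C * real y * lam p y" using C y by auto
    finally have "Mfun p (min x y) / (p y * lam p y) \<le> C * real y * lam p y / (p y * lam p y)"
      by (rule divide_right_mono) (use dpos in simp)
    also have "\<dots> = C * real y / p y" using lp by (simp add: field_simps)
    also have "\<dots> \<le> C * real h / \<epsilon>"
      using py y C E by (intro frac_le mult_left_mono) auto
    finally show "Mfun p (min x y) / ((1 - p y) * lam p (y - 1)) \<le> C / \<epsilon> * real h"
      unfolding d by simp
  qed
  also have "\<dots> = real (h - 1) * (C / \<epsilon> * real h)" by simp
  also have "\<dots> \<le> real h * (C / \<epsilon> * real h)"
    using C E by (intro mult_right_mono) auto
  finally show ?thesis by (simp add: power2_eq_square algebra_simps)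
qed

lemma decay:
  assumes P: "\<forall>x\<ge>1. 0 \<le> p x \<and> p x \<le> 1"
    and V: "\<forall>x\<in>{0<..<h}. Qop p h V x \<le> V x - 1" "\<forall>x\<in>{0<..<h}. 0 \<le> V x \<and> V x \<le> D"
    and D: "D > 0" and x: "x \<in> {0<..<h}"
  shows "uu p h k x \<le> 2 * exp (- ln 2 * real k / (2 * D + 1))"
proof -
  define N where "N = nat \<lceil>2 * D\<rceil>"
  have N1: "real N \<ge> 2 * D" "real N \<le> 2 * D + 1" unfolding N_def using D by linarith+
  have Npos: "N > 0" using N1 D by auto
  have uN: "uu p h N y \<le> 1/2" if y: "y \<in> {0<..<h}" for y
  proof -
    have "real N * uu p h N y \<le> V y" using lyap_bound[OF P _ _ y, of V N] V by auto
    also have "\<dots> \<le> D" using V y by auto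
    finally have "real N * uu p h N y \<le> D" .
    moreover have "2 * D * uu p h N y \<le> real N * uu p h N y"
      by (rule mult_right_mono) (use N1 uu_nonneg[OF P y] in auto)
    ultimately have "D * (2 * uu p h N y) \<le> D * 1" by simp
    then have "2 * uu p h N y \<le> 1" using D by (rule mult_left_le_imp_le)
    then show ?thesis by simp
  qed
  have jN: "\<forall>y\<in>{0<..<h}. uu p h (j * N) y \<le> (1/2)^j" for j
  proof (induction j)
    case 0 then show ?case by (simp add: uu_def)
  next
    case (Suc j)
    show ?case
    proof
      fix y assume y: "y \<in> {0<..<h}"
      have "uu p h (Suc j * N) y = iterQ p h N (uu p h (j * N)) y"
        unfolding uu_def by (simp add: iterQ_add[symmetric] add.commute)
      also have "\<dots> \<le> (1/2)^j * uu p h N y" by (rule iterQ_const_bound[OF P Suc y])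
      also have "\<dots> \<le> (1/2)^j * (1/2)" using uN[OF y] by (intro mult_left_mono) auto
      finally show "uu p h (Suc j * N) y \<le> (1/2)^Suc j" by simp
    qed
  qed
  define j where "j = k div N"
  have "uu p h k x \<le> uu p h (j * N) x"
    by (rule uu_antimono[OF P x]) (simp add: j_def)
  also have "\<dots> \<le> (1/2)^j" using jN x by blast
  also have "\<dots> = exp (- ln 2 * real j)"
  proof -
    have "exp (- ln 2 * real j) = exp (- ln 2) ^ j" using exp_of_nat_mult[of j "- ln 2"] by (simp add: mult.commute)
    moreover have "exp (- ln (2::real)) = 1/2" by (simp add: exp_minus)
    ultimately show ?thesis by simp
  qed
  also have "\<dots> \<le> 2 * exp (- ln 2 * real k / (2 * D + 1))"
  proof -
    have md: "N * j + k mod N = k" unfolding j_def by (rule mult_div_mod_eq)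
    have "k mod N < N" using Npos by simp
    then have "k < N * (j + 1)" using md by (simp add: distrib_left)
    then have "real k < real (N * (j + 1))" by (simp only: of_nat_less_iff)
    then have "real k < real N * (real j + 1)" by (simp add: distrib_left)
    then have "real k / real N < real j + 1" using Npos by (simp add: field_simps)
    moreover have "real k / (2 * D + 1) \<le> real k / real N"
      using N1 Npos by (intro divide_left_mono) auto
    ultimately have "real k / (2 * D + 1) \<le> real j + 1" by linarith
    then have "ln 2 * (real k / (2 * D + 1)) \<le> ln 2 * (real j + 1)"
      by (rule mult_left_mono) simp
    moreover have "ln 2 * (real j + 1) = ln 2 * real j + ln 2" by (simp add: distrib_left)
    moreover have "- ln 2 * real k / (2 * D + 1) = - (ln 2 * (real k / (2 * D + 1)))" by simp
    ultimately have "- ln 2 * real j \<le> ln 2 + (- ln 2 * real k / (2 * D + 1))" by linarith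
    then have "exp (- ln 2 * real j) \<le> exp (ln 2 + (- ln 2 * real k / (2 * D + 1)))" by simp
    also have "\<dots> = exp (ln 2) * exp (- ln 2 * real k / (2 * D + 1))" by (rule exp_add)
    also have "\<dots> = 2 * exp (- ln 2 * real k / (2 * D + 1))" by simp
    finally show ?thesis .
  qed
  finally show ?thesis .
qed




lemma Lfun_pos: "Lfun p \<delta> x > 0" unfolding Lfun_def by simp

lemma E1:
  fixes p :: "nat \<Rightarrow> real"
  assumes E: "\<forall>x\<ge>1. \<epsilon> \<le> p x \<and> p x \<le> 1 - \<epsilon>" "\<epsilon> > 0"
    and delta: "\<delta> > -1" and K0: "K0 > 0"
    and lamasym: "(\<lambda>x. lam p x) \<sim>[at_top] (\<lambda>x. K0 * real x powr (2 * kappa \<delta> - 1) / Lfun p \<delta> x)"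
    and l1b: "\<And>x. x \<ge> l1 \<Longrightarrow>
               2 * kappa \<delta> * Mfun p x / (K0 * real x powr (2 * kappa \<delta>) / Lfun p \<delta> x)
                 \<in> {7/8<..<9/8}"
  shows "\<exists>C\<ge>1. \<forall>y\<ge>1. Mfun p y \<le> C * real y * lam p y"
proof -
  define g where "g = (\<lambda>x::nat. K0 * real x powr (2 * kappa \<delta> - 1) / Lfun p \<delta> x)"
  define \<kappa> where "\<kappa> = kappa \<delta>"
  have kpos: "\<kappa> > 0" unfolding \<kappa>_def kappa_def using delta by simp
  have lp: "\<And>x. lam p x > 0" using lam_pos[OF E] .
  have "((\<lambda>x. if lam p x = 0 \<and> g x = 0 then 1 else lam p x / g x) \<longlongrightarrow> 1) at_top"
    using asymp_equivD[OF lamasym] unfolding g_def .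
  then have "((\<lambda>x. lam p x / g x) \<longlongrightarrow> 1) at_top"
    using lp by (simp add: less_imp_neq[symmetric])
  then have "eventually (\<lambda>x. 1/2 < lam p x / g x) at_top"
    by (rule order_tendstoD(1)) simp
  then obtain N where N: "\<And>x. x \<ge> N \<Longrightarrow> 1/2 < lam p x / g x"
    by (auto simp: eventually_at_top_linorder)
  define Y where "Y = max N (max l1 1)"
  define Cs where "Cs = (\<Sum>z\<in>{1..<Y}. Mfun p z / (real z * lam p z))"
  have Cs0: "Cs \<ge> 0" unfolding Cs_def
    using M_nonneg[OF E] lp by (intro sum_nonneg divide_nonneg_pos) auto
  define C where "C = 9 / (8 * \<kappa>) + Cs + 1"
  have "C \<ge> 1" unfolding C_def using Cs0 kpos by simp
  moreover have "Mfun p y \<le> C * real y * lam p y" if y: "y \<ge> 1" for y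
  proof (cases "y < Y")
    case True
    have yl: "0 \<le> real y * lam p y" using lp[of y] by simp
    have "Mfun p y / (real y * lam p y) \<le> Cs"
      unfolding Cs_def using True y M_nonneg[OF E] lp
      by (intro member_le_sum divide_nonneg_pos) auto
    then have "Mfun p y \<le> Cs * (real y * lam p y)"
      using y lp by (simp add: divide_le_eq)
    also have "\<dots> \<le> C * (real y * lam p y)"
      unfolding C_def using kpos yl by (intro mult_right_mono) auto
    finally show ?thesis by (simp add: mult.assoc)
  next
    case False
    have yl: "0 \<le> real y * lam p y" using lp[of y] by simp
    have yN: "y \<ge> N" "y \<ge> l1" using False unfolding Y_def by auto
    have gpos: "g y > 0" unfolding g_def using y K0 Lfun_pos by simp
    have "1/2 < lam p y / g y" using N yN by simp
    then have lg: "g y < 2 * lam p y" using gpos by (simp add: field_simps)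
    define A where "A = K0 * real y powr (2 * \<kappa>) / Lfun p \<delta> y"
    have Ay: "A = real y * g y"
    proof -
      have "real y powr (2 * \<kappa>) = real y powr (1 + (2 * \<kappa> - 1))" by simp
      also have "\<dots> = real y powr 1 * real y powr (2 * \<kappa> - 1)" by (rule powr_add)
      also have "\<dots> = real y * real y powr (2 * \<kappa> - 1)" using y by simp
      finally show ?thesis unfolding A_def g_def \<kappa>_def by simp
    qed
    have Apos: "A > 0" using Ay gpos y by simp
    have "2 * \<kappa> * Mfun p y / A < 9/8" using l1b[OF yN(2)] unfolding A_def \<kappa>_def by simp
    then have "2 * \<kappa> * Mfun p y < 9/8 * A" using Apos by (simp add: divide_less_eq)
    then have "Mfun p y < 9/8 * A / (2 * \<kappa>)" using kpos by (simp add: field_simps)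
    also have "\<dots> = 9 / (16 * \<kappa>) * (real y * g y)" unfolding Ay by simp
    also have "\<dots> \<le> 9 / (16 * \<kappa>) * (real y * (2 * lam p y))"
      using lg kpos y by (intro mult_left_mono) auto
    also have "\<dots> = 9 / (8 * \<kappa>) * (real y * lam p y)" by simp
    also have "\<dots> \<le> C * (real y * lam p y)"
      unfolding C_def using Cs0 yl by (intro mult_right_mono) auto
    finally show ?thesis by (simp add: mult.assoc)
  qed
  ultimately show ?thesis by blast
qed

lemma dbl:
  fixes p :: "nat \<Rightarrow> real"
  assumes E: "\<forall>x\<ge>1. \<epsilon> \<le> p x \<and> p x \<le> 1 - \<epsilon>" "\<epsilon> > 0"
    and delta: "\<delta> > -1" and K0: "K0 > 0" and l1: "l1 \<ge> 1"
    and l1b: "\<And>x. x \<ge> l1 \<Longrightarrow>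
               2 * kappa \<delta> * Mfun p x / (K0 * real x powr (2 * kappa \<delta>) / Lfun p \<delta> x)
                 \<in> {7/8<..<9/8}"
    and l1c: "\<And>x. x \<ge> l1 \<Longrightarrow>
               2 * kappa \<delta> * (Mfun p (2 * x) - Mfun p x) /
                 (K0 * (2 powr (2 * kappa \<delta>) - 1) * real x powr (2 * kappa \<delta>) / Lfun p \<delta> x)
                 \<in> {7/8<..<9/8}"
    and x: "x \<ge> l1"
  shows "Mfun p (2 * x) \<le> (1 + 9/7 * (2 powr (2 * kappa \<delta>) - 1)) * Mfun p x"
proof -
  define \<kappa> where "\<kappa> = kappa \<delta>"
  have kpos: "\<kappa> > 0" unfolding \<kappa>_def kappa_def using delta by simp
  define D where "D = 2 powr (2 * \<kappa>) - 1"
  have Dpos: "D > 0" unfolding D_def using kpos by simp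
  define A where "A = K0 * real x powr (2 * \<kappa>) / Lfun p \<delta> x"
  have Apos: "A > 0" unfolding A_def using x l1 K0 Lfun_pos by simp
  have "7/8 < 2 * \<kappa> * Mfun p x / A" using l1b[OF x] unfolding A_def \<kappa>_def by simp
  then have h1: "7/8 * A < 2 * \<kappa> * Mfun p x" using Apos by (simp add: less_divide_eq)
  have "K0 * D * real x powr (2 * \<kappa>) / Lfun p \<delta> x = D * A" unfolding A_def by simp
  then have "2 * \<kappa> * (Mfun p (2 * x) - Mfun p x) / (D * A) < 9/8"
    using l1c[OF x] unfolding \<kappa>_def D_def by simp
  then have h2: "2 * \<kappa> * (Mfun p (2 * x) - Mfun p x) < 9/8 * (D * A)"
    using Apos Dpos by (simp add: divide_less_eq)
  have "9/8 * (D * A) = 9/7 * D * (7/8 * A)" by simp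
  also have "\<dots> \<le> 9/7 * D * (2 * \<kappa> * Mfun p x)"
    using h1 Dpos by (intro mult_left_mono) auto
  finally have "2 * \<kappa> * (Mfun p (2 * x) - Mfun p x) < 2 * \<kappa> * (9/7 * D * Mfun p x)"
    using h2 by (simp add: algebra_simps)
  then have "Mfun p (2 * x) - Mfun p x < 9/7 * D * Mfun p x" using kpos by simp
  then show ?thesis unfolding D_def \<kappa>_def by (simp add: algebra_simps)
qed

lemma dbl_iter:
  fixes p :: "nat \<Rightarrow> real" and \<rho> :: real
  assumes "\<And>x. x \<ge> l1 \<Longrightarrow> Mfun p (2 * x) \<le> \<rho> * Mfun p x" "\<rho> \<ge> 0" "x \<ge> l1"
  shows "Mfun p (2^i * x) \<le> \<rho>^i * Mfun p x"
proof (induction i)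
  case 0 then show ?case by simp
next
  case (Suc i)
  have "2^i * x \<ge> l1" using assms(3) by (metis dual_order.trans le_add2 mult_le_mono1 one_le_numeral one_le_power mult_1)
  then have "Mfun p (2^Suc i * x) \<le> \<rho> * Mfun p (2^i * x)" using assms(1)[of "2^i*x"] by (simp add: mult.assoc)
  also have "\<dots> \<le> \<rho> * (\<rho>^i * Mfun p x)" using Suc assms(2) by (intro mult_left_mono)
  finally show ?case by simp
qed




lemma decay2:
  fixes p :: "nat \<Rightarrow> real"
  assumes E: "\<forall>x\<ge>1. \<epsilon> \<le> p x \<and> p x \<le> 1 - \<epsilon>" "\<epsilon> > 0"
    and C: "C \<ge> 1" "\<forall>y\<ge>1. Mfun p y \<le> C * real y * lam p y"
    and h: "h \<ge> 1" and x: "x \<in> {0<..<h}"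
  shows "uu p h k x \<le> 2 * exp (- (ln 2 / (2 * (C / \<epsilon>) + 1)) * real k / real h ^ 2)"
proof -
  define D where "D = C / \<epsilon> * real h ^ 2"
  have hh: "real h ^ 2 \<ge> 1" using h by simp
  have CE: "C / \<epsilon> > 0" using C E by simp
  have Dpos: "D > 0" unfolding D_def using CE hh h by (intro mult_pos_pos) auto
  have "uu p h k x \<le> 2 * exp (- ln 2 * real k / (2 * D + 1))"
  proof (rule decay[OF P01[OF E] _ _ Dpos x])
    show "\<forall>x\<in>{0<..<h}. Qop p h (Vf p h) x \<le> Vf p h x - 1" using Vf_lyap[OF E] by blast
    show "\<forall>x\<in>{0<..<h}. 0 \<le> Vf p h x \<and> Vf p h x \<le> D"
      using Vf_nonneg[OF E] Vf_bound[OF E C(2)] C(1) unfolding D_def by auto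
  qed
  also have "\<dots> \<le> 2 * exp (- (ln 2 / (2 * (C / \<epsilon>) + 1)) * real k / real h ^ 2)"
  proof -
    have "2 * D + 1 \<le> (2 * (C / \<epsilon>) + 1) * real h ^ 2"
      unfolding D_def using hh by (simp add: algebra_simps)
    then have "ln 2 * real k / ((2 * (C / \<epsilon>) + 1) * real h ^ 2) \<le> ln 2 * real k / (2 * D + 1)"
      using Dpos by (intro divide_left_mono) auto
    moreover have "- (ln 2 / (2 * (C / \<epsilon>) + 1)) * real k / real h ^ 2 = - (ln 2 * real k / ((2 * (C / \<epsilon>) + 1) * real h ^ 2))"
      by simp
    moreover have "- ln 2 * real k / (2 * D + 1) = - (ln 2 * real k / (2 * D + 1))" by simp
    ultimately show ?thesis by simp
  qed
  finally show ?thesis .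
qed

lemma choose_t:
  fixes \<rho> c' :: real
  assumes "\<rho> \<ge> 1" "c' > 0"
  shows "\<exists>t\<ge>2. \<rho>^t * exp (- c' * (4^t / 16 - 1)) \<le> 1/2"
proof -
  define \<beta> where "\<beta> = c' / 16"
  define X where "X = ln \<rho> + ln 2 + c'"
  have lr: "ln \<rho> \<ge> 0" using assms by simp
  have l2: "ln (2::real) > 0" by (rule ln_gt_zero) simp
  have Xpos: "X > 0" unfolding X_def using lr assms l2 by linarith
  have bpos: "\<beta> > 0" unfolding \<beta>_def using assms by simp
  obtain t0 where t0: "X / \<beta> < 2 ^ t0" using real_arch_pow[of 2 "X / \<beta>"] by auto
  define t where "t = max t0 2"
  have t2: "t \<ge> 2" unfolding t_def by simp
  have tt0: "(2::real) ^ t0 \<le> 2 ^ t" unfolding t_def by (intro power_increasing) auto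
  have "X / \<beta> < 2 ^ t" using t0 tt0 by linarith
  then have bX: "X \<le> \<beta> * 2 ^ t" using bpos by (simp add: divide_less_eq mult.commute)
  have tt: "real t + 1 \<le> 2 ^ t"
  proof -
    have "t + 1 \<le> 2 ^ t" by (induction t) auto
    then have "real (t + 1) \<le> real (2 ^ t)" by (simp only: of_nat_le_iff)
    then show ?thesis by simp
  qed
  have four: "(4::real) ^ t = 2 ^ t * 2 ^ t"
    by (simp flip: power_mult_distrib)
  have "X * (real t + 1) \<le> \<beta> * 2 ^ t * 2 ^ t"
    by (rule mult_mono[OF bX tt]) (use Xpos bpos in auto)
  then have "X * (real t + 1) \<le> \<beta> * 4 ^ t" using four by (simp add: mult.assoc)
  moreover have "real t * ln \<rho> + ln 2 + c' \<le> X * (real t + 1)"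
    unfolding X_def using lr assms by (simp add: algebra_simps)
  moreover have "c' * (4^t / 16 - 1) = \<beta> * 4 ^ t - c'" unfolding \<beta>_def by (simp add: right_diff_distrib)
  ultimately have key: "real t * ln \<rho> - c' * (4^t / 16 - 1) \<le> - ln 2"
    by linarith
  have rt: "\<rho>^t = exp (real t * ln \<rho>)" using assms by (simp add: exp_of_nat_mult)
  have eqx: "real t * ln \<rho> + (- c' * (4^t / 16 - 1)) = real t * ln \<rho> - c' * (4^t / 16 - 1)" by simp
  have "\<rho>^t * exp (- c' * (4^t / 16 - 1)) = exp (real t * ln \<rho> - c' * (4^t / 16 - 1))"
    unfolding rt eqx[symmetric] by (simp only: exp_add)
  also have "\<dots> \<le> exp (- ln 2)" using key by simp
  also have "\<dots> = 1/2" by (simp add: exp_minus)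
  finally show ?thesis using t2 by blast
qed




lemma main_ind:
  fixes p :: "nat \<Rightarrow> real"
  assumes E: "\<forall>x\<ge>1. \<epsilon> \<le> p x \<and> p x \<le> 1 - \<epsilon>" "\<epsilon> > 0"
    and c: "c > 0"
    and dec: "\<forall>h\<ge>1. \<forall>k. \<forall>x\<in>{0<..<h}. uu p h k x \<le> 2 * exp (- c * real k / real h ^ 2)"
    and rho: "\<rho> \<ge> 1"
    and dbl: "\<forall>x\<ge>l1. \<forall>i. Mfun p (2^i * x) \<le> \<rho>^i * Mfun p x"
  shows "\<exists>K c'. K > 0 \<and> c' > 0 \<and> (\<forall>h\<ge>2. \<forall>n. real h ^ 2 \<le> real n \<longrightarrow>
            uu p h n 1 \<le> K / Mfun p h * exp (- c' * real n / real h ^ 2))"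
proof -
  define c' where "c' = c / 4"
  have c'pos: "c' > 0" unfolding c'_def using c by simp
  obtain t where t2: "t \<ge> 2" and tc: "\<rho>^t * exp (- c' * (4^t / 16 - 1)) \<le> 1/2"
    using choose_t[OF rho c'pos] by blast
  define H0 where "H0 = 2^t * (l1 + 2)"
  define K where "K = 4 * \<rho>^t + 2 * Mfun p H0"
  have rtpos: "\<rho>^t \<ge> 1" using rho by simp
  have MH0: "Mfun p H0 \<ge> 0" using M_nonneg[OF E] .
  have Kpos: "K > 0" unfolding K_def using rtpos MH0 by simp
  have main: "\<forall>n. real h ^ 2 \<le> real n \<longrightarrow> uu p h n 1 \<le> K / Mfun p h * exp (- c' * real n / real h ^ 2)"
    if "h \<ge> 2" for h
    using that
  proof (induction h rule: less_induct)
    case (less h)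
    show ?case
    proof (intro allI impI)
      fix n assume n: "real h ^ 2 \<le> real n"
      have h1: "(1::nat) \<in> {0<..<h}" using less.prems by simp
      have Mh: "Mfun p h \<ge> 1" using M_pos[OF E, of h] less.prems by simp
      have hpos: "real h > 0" using less.prems by simp
      define \<tau> where "\<tau> = real n / real h ^ 2"
      have tau1: "\<tau> \<ge> 1" unfolding \<tau>_def using n hpos by simp
      have ex_eq: "- c' * real n / real h ^ 2 = - c' * \<tau>" unfolding \<tau>_def by simp
      show "uu p h n 1 \<le> K / Mfun p h * exp (- c' * real n / real h ^ 2)"
      proof (cases "h < H0")
        case True
        have "uu p h n 1 \<le> 2 * exp (- c * real n / real h ^ 2)" using dec less.prems h1 by auto
        also have "\<dots> = 2 * exp (- c * \<tau>)" unfolding \<tau>_def by simp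
        also have "\<dots> \<le> 2 * exp (- c' * \<tau>)"
          using tau1 c unfolding c'_def by simp
        also have "\<dots> \<le> K / Mfun p h * exp (- c' * \<tau>)"
        proof -
          have "Mfun p h \<le> Mfun p H0" using M_mono[OF E] True by simp
          then have "2 * Mfun p h \<le> K" unfolding K_def using rtpos by simp
          then have "2 \<le> K / Mfun p h" using Mh by (simp add: le_divide_eq)
          then show ?thesis by (intro mult_right_mono) auto
        qed
        finally show ?thesis unfolding ex_eq .
      next
        case False
        then have hH: "H0 \<le> h" by simp
        define a where "a = h div 2^t + 1"
        have "(2^t * (l1 + 2)) div 2^t \<le> h div 2^t" using hH unfolding H0_def by (rule div_le_mono)
        then have hd: "h div 2^t \<ge> l1 + 2" by simp
        have al1: "a \<ge> l1" "a \<ge> 2" unfolding a_def using hd by auto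
        have ha: "h \<le> 2^t * a"
        proof -
          have e: "2^t * (h div 2^t) + h mod 2^t = h" by (rule mult_div_mod_eq)
          have m: "h mod 2^t < (2::nat)^t" by simp
          have d: "2^t * (h div 2^t + 1) = 2^t * (h div 2^t) + (2::nat)^t" by (simp add: distrib_left)
          show ?thesis unfolding a_def d using e m by linarith
        qed
        have p2t: "(2::real)^t \<ge> 4"
        proof -
          have "(2::real)^2 \<le> 2^t" using t2 by (intro power_increasing) auto
          then show ?thesis by simp
        qed
        have rdiv: "real (h div 2^t) \<le> real h / 2^t"
          using of_nat_div_le_of_nat[where ?'a=real, of h "2^t"] by simp
        have "1 \<le> real (h div 2^t)" using hd by simp
        then have hge: "1 \<le> real h / 2^t" using rdiv by linarith
        have raeq: "real a = real (h div 2^t) + 1" unfolding a_def by simp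
        have ra: "real a \<le> 2 * (real h / 2^t)" using raeq rdiv hge by linarith
        have "2 * (real h / 2^t) \<le> 2 * (real h / 4)" using p2t hpos
          by (intro mult_left_mono divide_left_mono) auto
        then have ra2: "real a \<le> real h / 2" using ra by simp
        have ah: "a < h" using ra2 hpos by linarith
        have apos: "real a > 0" using al1 by simp
        have a_sq: "real a ^ 2 \<le> 4 * real h ^ 2 / 4^t"
        proof -
          have "real a ^ 2 \<le> (2 * (real h / 2^t)) ^ 2" using ra apos by (intro power_mono) auto
          also have "\<dots> = 4 * real h ^ 2 / (2^t * 2^t)"
            by (simp add: power_divide power_mult_distrib power2_eq_square)
          also have "(2::real)^t * 2^t = 4^t" by (simp flip: power_mult_distrib)
          finally show ?thesis .
        qed
        define j where "j = n div 2"
        have jle: "j \<le> n" unfolding j_def by simp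
        have n4: "real n \<ge> 4"
        proof -
          have "real h ^ 2 \<ge> 2 ^ 2" using less.prems by (intro power_mono) auto
          then have "real h ^ 2 \<ge> 4" by simp
          then show ?thesis using n by linarith
        qed
        have jn: "real j \<ge> real n / 4"
        proof -
          have "n = 2 * j + n mod 2" unfolding j_def by simp
          moreover have "n mod 2 \<le> 1" by simp
          ultimately have "real n \<le> 2 * real j + 1" by linarith
          then show ?thesis using n4 by linarith
        qed
        have nj: "real (n - j) \<ge> real n / 2"
        proof -
          have "real j \<le> real n / 2" unfolding j_def using of_nat_div_le_of_nat[where ?'a=real, of n 2] by simp
          then show ?thesis using jle by (simp add: of_nat_diff)
        qed
        have ja: "real a ^ 2 \<le> real j"
        proof -
          have "real a ^ 2 \<le> (real h / 2) ^ 2" using ra2 apos by (intro power_mono) auto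
          also have "\<dots> = real h ^ 2 / 4" by (simp add: power_divide)
          also have "\<dots> \<le> real n / 4" using n by simp
          finally show ?thesis using jn by linarith
        qed
        have IH: "uu p a j 1 \<le> K / Mfun p a * exp (- c' * real j / real a ^ 2)"
          using less.IH[OF ah al1(2)] ja by blast
        define b where "b = (\<lambda>k::nat. 2 * exp (- c * real k / real h ^ 2))"
        have bb: "\<forall>k. \<forall>y\<in>{0<..<h}. uu p h k y \<le> b k" unfolding b_def using dec less.prems by auto
        have b0: "\<forall>k. 0 \<le> b k" unfolding b_def by simp
        have bm: "\<forall>k. b (Suc k) \<le> b k" unfolding b_def using c hpos
          by (auto intro!: divide_right_mono mult_left_mono)
        have dc: "uu p h n 1 \<le> uu p a j 1 + Mfun p 1 / Mfun p a * b (n - j)"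
          by (rule decomp[OF E al1(2) _ bb b0 bm jle]) (use ah al1 in auto)
        have Ma: "Mfun p a \<ge> 1" using M_pos[OF E, of a] al1 by simp
        define X where "X = exp (- c' * \<tau>)"
        have Xpos: "X > 0" unfolding X_def by simp
        have f4: "(4::real)^t \<ge> 16"
        proof -
          have "(4::real)^2 \<le> 4^t" using t2 by (intro power_increasing) auto
          then show ?thesis by simp
        qed
        have e1: "exp (- c' * real j / real a ^ 2) \<le> X / (2 * \<rho>^t)"
        proof -
          have "real n / 4 / (4 * real h ^ 2 / 4^t) \<le> real j / real a ^ 2"
            using jn a_sq apos hpos by (intro frac_le) auto
          moreover have "real n / 4 / (4 * real h ^ 2 / 4^t) = 4^t / 16 * \<tau>"
            unfolding \<tau>_def using hpos by (simp add: field_simps)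
          ultimately have q: "4^t / 16 * \<tau> \<le> real j / real a ^ 2" by linarith
          have q2: "(4^t / 16 - 1) * 1 \<le> (4^t / 16 - 1) * \<tau>"
            using tau1 f4 by (intro mult_left_mono) auto
          have "- c' * real j / real a ^ 2 = - (c' * (real j / real a ^ 2))" by simp
          also have "\<dots> \<le> - (c' * (4^t / 16 * \<tau>))"
          proof -
            have "c' * (4^t / 16 * \<tau>) \<le> c' * (real j / real a ^ 2)"
              by (rule mult_left_mono[OF q]) (use c'pos in simp)
            then show ?thesis by linarith
          qed
          also have "\<dots> = - c' * \<tau> + (- c' * ((4^t / 16 - 1) * \<tau>))" by (simp add: algebra_simps)
          also have "\<dots> \<le> - c' * \<tau> + (- c' * (4^t / 16 - 1))"
          proof -
            have "c' * ((4^t / 16 - 1) * 1) \<le> c' * ((4^t / 16 - 1) * \<tau>)"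
              by (rule mult_left_mono[OF q2]) (use c'pos in simp)
            then show ?thesis by simp
          qed
          finally have "exp (- c' * real j / real a ^ 2) \<le> exp (- c' * \<tau> + (- c' * (4^t / 16 - 1)))" by simp
          also have "\<dots> = X * exp (- c' * (4^t / 16 - 1))" unfolding X_def by (rule exp_add)
          also have "\<dots> \<le> X * (1 / (2 * \<rho>^t))"
          proof -
            have "exp (- c' * (4^t / 16 - 1)) \<le> 1 / (2 * \<rho>^t)"
              using tc rtpos by (simp add: field_simps)
            then show ?thesis using Xpos by (intro mult_left_mono) auto
          qed
          finally show ?thesis by simp
        qed
        have e2: "b (n - j) \<le> 2 * X"
        proof -
          have "- c * real (n - j) / real h ^ 2 \<le> - c * (real n / 2) / real h ^ 2"
            using nj c hpos by (intro divide_right_mono) auto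
          also have "\<dots> = - 2 * c' * \<tau>" unfolding c'_def \<tau>_def by simp
          also have "\<dots> \<le> - c' * \<tau>" using c'pos tau1 by simp
          finally show ?thesis unfolding b_def X_def by simp
        qed
        have "uu p h n 1 \<le> K / Mfun p a * (X / (2 * \<rho>^t)) + 1 / Mfun p a * (2 * X)"
        proof -
          have "uu p a j 1 \<le> K / Mfun p a * (X / (2 * \<rho>^t))"
            using IH e1 Kpos Ma by (smt (verit) divide_nonneg_pos mult_left_mono)
          moreover have "Mfun p 1 / Mfun p a * b (n - j) \<le> 1 / Mfun p a * (2 * X)"
          proof -
            have M1': "Mfun p 1 = 1" by (rule M_1)
            have "b (n - j) / Mfun p a \<le> 2 * X / Mfun p a" using e2 Ma by (intro divide_right_mono) auto
            then show ?thesis unfolding M1' by simp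
          qed
          ultimately show ?thesis using dc by linarith
        qed
        also have "\<dots> = (K * X / (2 * \<rho>^t) + 2 * X) / Mfun p a"
        proof -
          have "Mfun p a \<noteq> 0" "\<rho>^t \<noteq> 0" using Ma rtpos by linarith+
          then show ?thesis by (simp add: field_simps)
        qed
        also have "\<dots> \<le> (K * X / \<rho>^t) / Mfun p a"
        proof -
          have "2 * X \<le> K * X / (2 * \<rho>^t)"
            using Xpos rtpos unfolding K_def using MH0 by (simp add: field_simps)
          then show ?thesis using Ma by (intro divide_right_mono) auto
        qed
        also have "\<dots> = K * X / (\<rho>^t * Mfun p a)" by simp
        also have "\<dots> \<le> K * X / Mfun p h"
        proof -
          have "Mfun p h \<le> Mfun p (2^t * a)" using M_mono[OF E] ha by simp
          also have "\<dots> \<le> \<rho>^t * Mfun p a" using dbl al1 by blast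
          finally have "Mfun p h \<le> \<rho>^t * Mfun p a" .
          then show ?thesis using Kpos Xpos Mh by (intro divide_left_mono) auto
        qed
        finally show ?thesis unfolding ex_eq X_def by simp
      qed
    qed
  qed
  show ?thesis using main Kpos c'pos by blast
qed




theorem lemma4p2:
  fixes p :: "nat \<Rightarrow> real" and \<delta> \<epsilon> K0 :: real and l1 :: nat
  assumes delta: "\<delta> > -1"
    and eps: "\<epsilon> > 0"
    and ellip: "\<And>x. x \<ge> 1 \<Longrightarrow> \<epsilon> \<le> p x \<and> p x \<le> 1 - \<epsilon>"
    and Ro: "((\<lambda>x. real x * Rterm p \<delta> x) \<longlongrightarrow> 0) at_top"
    and K0: "K0 > 0"
    and lamasym: "(\<lambda>x. lam p x) \<sim>[at_top]
                    (\<lambda>x. K0 * real x powr (2 * kappa \<delta> - 1) / Lfun p \<delta> x)"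
    and l1: "l1 \<ge> 1"
    and l1a: "\<And>x. x \<ge> l1 \<Longrightarrow> real x * \<bar>Rterm p \<delta> x\<bar> \<le> 1/2"
    and l1b: "\<And>x. x \<ge> l1 \<Longrightarrow>
               2 * kappa \<delta> * Mfun p x / (K0 * real x powr (2 * kappa \<delta>) / Lfun p \<delta> x)
                 \<in> {7/8<..<9/8}"
    and l1c: "\<And>x. x \<ge> l1 \<Longrightarrow>
               2 * kappa \<delta> * (Mfun p (2 * x) - Mfun p x) /
                 (K0 * (2 powr (2 * kappa \<delta>) - 1) * real x powr (2 * kappa \<delta>) / Lfun p \<delta> x)
                 \<in> {7/8<..<9/8}"
    and l1d: "\<And>x. x \<ge> l1 \<Longrightarrow> \<delta> \<noteq> 0 \<Longrightarrow>
               \<bar>real x * (2 * p x - 1) + \<delta> / 2\<bar> < \<bar>\<delta>\<bar> / 4"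
  shows "\<exists>K3 K4. K3 > 0 \<and> K4 > 0 \<and>
           (\<forall>h m. h > l1 \<longrightarrow> real m \<ge> 4 * real h ^ 2 \<longrightarrow>
              stay_prob p h m \<le> K3 / Mfun p h * exp (- K4 * real m / real h ^ 2))"
proof -
  have E: "\<forall>x\<ge>1. \<epsilon> \<le> p x \<and> p x \<le> 1 - \<epsilon>" using ellip by blast
  obtain C where C: "C \<ge> 1" "\<forall>y\<ge>1. Mfun p y \<le> C * real y * lam p y"
    using E1[OF E eps delta K0 lamasym l1b] by blast
  define c where "c = ln 2 / (2 * (C / \<epsilon>) + 1)"
  have l2: "ln (2::real) > 0" by (rule ln_gt_zero) simp
  have "C / \<epsilon> > 0" using C eps by simp
  then have cpos: "c > 0" unfolding c_def using l2 by (intro divide_pos_pos) auto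
  have dec: "\<forall>h\<ge>1. \<forall>k. \<forall>x\<in>{0<..<h}. uu p h k x \<le> 2 * exp (- c * real k / real h ^ 2)"
    unfolding c_def using decay2[OF E eps C] by blast
  define \<rho> where "\<rho> = 1 + 9/7 * (2 powr (2 * kappa \<delta>) - 1)"
  have kpos: "kappa \<delta> > 0" unfolding kappa_def using delta by simp
  have "(1::real) \<le> 2 powr (2 * kappa \<delta>)" using kpos by (intro ge_one_powr_ge_zero) auto
  then have rho: "\<rho> \<ge> 1" unfolding \<rho>_def by simp
  have dbl1: "\<And>x. x \<ge> l1 \<Longrightarrow> Mfun p (2 * x) \<le> \<rho> * Mfun p x"
    unfolding \<rho>_def by (rule dbl[OF E eps delta K0 l1 l1b l1c])
  have dbl2: "\<forall>x\<ge>l1. \<forall>i. Mfun p (2^i * x) \<le> \<rho>^i * Mfun p x"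
    using dbl_iter[OF dbl1] rho by auto
  obtain K c' where Kpos: "K > 0" and c'pos: "c' > 0"
    and main: "\<forall>h\<ge>2. \<forall>n. real h ^ 2 \<le> real n \<longrightarrow> uu p h n 1 \<le> K / Mfun p h * exp (- c' * real n / real h ^ 2)"
    using main_ind[OF E eps cpos dec rho dbl2] by blast
  show ?thesis
  proof (intro exI conjI allI impI)
    show "K * exp c' > 0" using Kpos by simp
    show "c' > 0" by (rule c'pos)
    fix h m assume h: "h > l1" and m: "real m \<ge> 4 * real h ^ 2"
    have h2: "h \<ge> 2" using h l1 by simp
    have hh: "real h ^ 2 \<ge> 1" using h2 by simp
    have m1: "m \<ge> 1" using m hh by (cases m) auto
    have Mh: "Mfun p h \<ge> 1" using M_pos[OF E eps, of h] h2 by simp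
    have rm: "real (m - 1) = real m - 1" using m1 by (simp add: of_nat_diff)
    have "real h ^ 2 \<le> real (m - 1)" using m hh rm by linarith
    then have "uu p h (m - 1) 1 \<le> K / Mfun p h * exp (- c' * real (m - 1) / real h ^ 2)"
      using main h2 by blast
    also have "- c' * real (m - 1) / real h ^ 2 = - c' * real m / real h ^ 2 + c' / real h ^ 2"
      unfolding rm by (simp add: diff_divide_distrib algebra_simps)
    also have "exp (\<dots>) = exp (- c' * real m / real h ^ 2) * exp (c' / real h ^ 2)" by (rule exp_add)
    also have "K / Mfun p h * (exp (- c' * real m / real h ^ 2) * exp (c' / real h ^ 2))
        \<le> K / Mfun p h * (exp (- c' * real m / real h ^ 2) * exp c')"
    proof -
      have "c' / real h ^ 2 \<le> c'" using c'pos hh by (simp add: divide_le_eq)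
      then have "exp (c' / real h ^ 2) \<le> exp c'" by simp
      then show ?thesis using Kpos Mh by (intro mult_left_mono) auto
    qed
    also have "\<dots> = K * exp c' / Mfun p h * exp (- c' * real m / real h ^ 2)" by simp
    finally show "stay_prob p h m \<le> K * exp c' / Mfun p h * exp (- c' * real m / real h ^ 2)"
      using stay_uu[OF h2 m1] by simp
  qed
qed


end
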